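(* Let $X=(X(t))_{t\in\mathbb R}$ be a wide sense stationary random process with covariance function $R_X$ and symmetric spectral measure $\mu$, and let $0<\alpha<1$. Then the following are equivalent: (i) $\int_{\mathbb R}|\lambda|^{2\alpha}\,d\mu(\lambda)<\infty$; (ii) $\int_{\mathbb R}|R_X(0)-R_X(h)|\,\frac{dh}{|h|^{1+2\alpha}}<\infty$.
   Context: A wide sense stationary random process $X=(X(t))_{t\in\mathbb R}\subset L^2(\Omega,\mathcal F,\mathbf P)$ satisfies $\mathbf E X(t)=0$, $\mathbf E(X(t)\overline{X(s)})=R_X(t-s)$ for all $t,s$, and $\lim_{t\to0}\mathbf E|X(t)-X(0)|^2=0$. By Bochner's theorem $R_X(\tau)=\int_{\mathbb R}e^{i\lambda\tau}\,d\mu(\lambda)$ for a finite Borel measure $\mu$ (the spectral measure); symmetric means $\mu(-A)=\mu(A)$ for Borel $A$. *)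

theory Defs
  imports "HOL-Probability.Probability"
begin

definition wss_process :: "'a measure \<Rightarrow> (real \<Rightarrow> 'a \<Rightarrow> complex) \<Rightarrow> (real \<Rightarrow> complex) \<Rightarrow> bool" where
  "wss_process M X R \<longleftrightarrow>
     prob_space M \<and>
     (\<forall>t. X t \<in> borel_measurable M \<and> integrable M (\<lambda>\<omega>. (cmod (X t \<omega>))\<^sup>2)) \<and>
     (\<forall>t. (LINT \<omega>|M. X t \<omega>) = 0) \<and>
     (\<forall>t s. (LINT \<omega>|M. X t \<omega> * cnj (X s \<omega>)) = R (t - s)) \<and>
     ((\<lambda>t. LINT \<omega>|M. (cmod (X t \<omega> - X 0 \<omega>))\<^sup>2) \<longlongrightarrow> 0) (at 0)"

definition spectral_measure :: "(real \<Rightarrow> complex) \<Rightarrow> real measure \<Rightarrow> bool" where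
  "spectral_measure R \<mu> \<longleftrightarrow>
     finite_measure \<mu> \<and> sets \<mu> = sets borel \<and>
     (\<forall>\<tau>. R \<tau> = (LINT l|\<mu>. cis (l * \<tau>)))"

definition symmetric_measure :: "real measure \<Rightarrow> bool" where
  "symmetric_measure \<mu> \<longleftrightarrow> (\<forall>A \<in> sets borel. emeasure \<mu> (uminus ` A) = emeasure \<mu> A)"

end

theory Submission
  imports Defs
begin

lemma one_minus_cos_le: "1 - cos (x::real) \<le> x^2 / 2"
proof -
  have "cos x = 1 - 2 * sin (x/2) ^ 2" using cos_double_sin[of "x/2"] by simp
  moreover have "sin (x/2)^2 \<le> (x/2)^2"
    using abs_sin_x_le_abs_x[of "x/2"] by (metis abs_ge_zero power2_abs power_mono)
  ultimately show ?thesis by (simp add: power_divide)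
qed

lemma C_pos:
  fixes \<alpha> :: real assumes "0 < \<alpha>"
  shows "(\<integral>\<^sup>+u. ennreal ((1 - cos u) / \<bar>u\<bar> powr (1 + 2*\<alpha>)) \<partial>lborel) \<noteq> 0"
proof -
  define c where "c = (1 - cos 1) / 2 powr (1 + 2*\<alpha>)"
  have "cos (1::real) < cos 0" by (rule cos_monotone_0_pi) (use pi_gt3 in auto)
  hence c: "c > 0" unfolding c_def by simp
  have le: "c * indicator {1..2} u \<le> (1 - cos u) / \<bar>u\<bar> powr (1 + 2*\<alpha>)" for u
  proof (cases "u \<in> {1..2}")
    case True
    have "cos u \<le> cos 1" by (rule cos_monotone_0_pi_le) (use True pi_gt3 in auto)
    moreover have "\<bar>u\<bar> powr (1 + 2*\<alpha>) \<le> 2 powr (1 + 2*\<alpha>)"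
      using True assms by (intro powr_mono2) auto
    moreover have "\<bar>u\<bar> powr (1 + 2*\<alpha>) > 0" using True by auto
    ultimately show ?thesis using True unfolding c_def
      by (simp add: frac_le)
  next
    case False
    have "cos u \<le> 1" by simp
    then show ?thesis using False by simp
  qed
  have "(\<integral>\<^sup>+u. ennreal (c * indicator {1..2::real} u) \<partial>lborel) \<le> (\<integral>\<^sup>+u. ennreal ((1 - cos u) / \<bar>u\<bar> powr (1 + 2*\<alpha>)) \<partial>lborel)"
    by (intro nn_integral_mono ennreal_leI le)
  moreover have "(\<integral>\<^sup>+u. ennreal (c * indicator {1..2::real} u) \<partial>lborel) = ennreal c"
    using c by (simp add: ennreal_mult nn_integral_cmult ennreal_indicator)
  ultimately have "ennreal c \<le> (\<integral>\<^sup>+u. ennreal ((1 - cos u) / \<bar>u\<bar> powr (1 + 2*\<alpha>)) \<partial>lborel)"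
    by simp
  then show ?thesis using c by (auto simp: ennreal_eq_0_iff)
qed


lemma C_fin:
  fixes \<alpha> :: real assumes a: "0 < \<alpha>" "\<alpha> < 1"
  shows "(\<integral>\<^sup>+u. ennreal ((1 - cos u) / \<bar>u\<bar> powr (1 + 2*\<alpha>)) \<partial>lborel) < \<infinity>"
proof -
  define p where "p = 1 - 2*\<alpha>"
  define q where "q = -1 - 2*\<alpha>"
  have p: "p > -1" and q: "q < -1" using a unfolding p_def q_def by auto
  define H1 where "H1 = (\<lambda>x::real. if x \<in> {0..1} then x powr p / 2 else 0)"
  define H2 where "H2 = (\<lambda>x::real. if x \<in> {1..} then 2 * x powr q else 0)"
  have mH1[measurable]: "H1 \<in> borel_measurable borel" unfolding H1_def by measurable
  have mH2[measurable]: "H2 \<in> borel_measurable borel" unfolding H2_def by measurable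
  have H1nn: "H1 x \<ge> 0" for x unfolding H1_def by auto
  have H2nn: "H2 x \<ge> 0" for x unfolding H2_def by auto
  have i1: "(H1 has_integral (1 / (p+1) / 2)) UNIV"
  proof -
    have "((\<lambda>x. x powr p / 2) has_integral (1 powr (p+1) / (p+1) / 2)) {0..1}"
      by (intro has_integral_divide has_integral_powr_from_0) (use p in auto)
    then show ?thesis unfolding H1_def by (subst has_integral_restrict_UNIV) simp
  qed
  have i2: "(H2 has_integral (2 * (-(1 powr (q+1)) / (q+1)))) UNIV"
  proof -
    have "((\<lambda>x. 2 * x powr q) has_integral (2 * (-(1 powr (q+1)) / (q+1)))) {1..}"
      by (intro has_integral_mult_right has_integral_powr_to_inf) (use q in auto)
    then show ?thesis unfolding H2_def by (subst has_integral_restrict_UNIV) simp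
  qed
  have n1: "(\<integral>\<^sup>+x. ennreal (H1 x) \<partial>lborel) < \<infinity>"
    using nn_integral_has_integral_lborel[OF mH1 H1nn i1] by simp
  have n2: "(\<integral>\<^sup>+x. ennreal (H2 x) \<partial>lborel) < \<infinity>"
    using nn_integral_has_integral_lborel[OF mH2 H2nn i2] by simp
  define H where "H = (\<lambda>x. H1 x + H2 x)"
  have mH[measurable]: "H \<in> borel_measurable borel" unfolding H_def by measurable
  have Hnn: "H x \<ge> 0" for x unfolding H_def using H1nn H2nn by (simp add: add_nonneg_nonneg)
  have nH: "(\<integral>\<^sup>+x. ennreal (H x) \<partial>lborel) < \<infinity>"
  proof -
    have "(\<integral>\<^sup>+x. ennreal (H x) \<partial>lborel) = (\<integral>\<^sup>+x. ennreal (H1 x) + ennreal (H2 x) \<partial>lborel)"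
      unfolding H_def using H1nn H2nn by (intro nn_integral_cong) (simp add: ennreal_plus)
    also have "\<dots> = (\<integral>\<^sup>+x. ennreal (H1 x) \<partial>lborel) + (\<integral>\<^sup>+x. ennreal (H2 x) \<partial>lborel)"
      by (rule nn_integral_add) auto
    finally show ?thesis using n1 n2 by simp
  qed
  have nH': "(\<integral>\<^sup>+x. ennreal (H (-x)) \<partial>lborel) < \<infinity>"
  proof -
    have "(\<integral>\<^sup>+x. ennreal (H x) \<partial>lborel) = ennreal \<bar>-1::real\<bar> * (\<integral>\<^sup>+x. ennreal (H (0 + (-1) * x)) \<partial>lborel)"
      by (rule nn_integral_real_affine) auto
    then show ?thesis using nH by simp
  qed
  have bound: "(1 - cos u) / \<bar>u\<bar> powr (1 + 2*\<alpha>) \<le> H u + H (-u)" for u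
  proof -
    consider "u = 0" | "0 < \<bar>u\<bar>" "\<bar>u\<bar> \<le> 1" | "1 \<le> \<bar>u\<bar>" by linarith
    then have "(1 - cos u) / \<bar>u\<bar> powr (1 + 2*\<alpha>) \<le> H \<bar>u\<bar>"
    proof cases
      case 1 then show ?thesis using Hnn by simp
    next
      case 2
      have pos: "\<bar>u\<bar> powr (1 + 2*\<alpha>) > 0" using 2 by simp
      have "(1 - cos u) / \<bar>u\<bar> powr (1 + 2*\<alpha>) \<le> (u^2/2) / \<bar>u\<bar> powr (1 + 2*\<alpha>)"
        using pos one_minus_cos_le[of u] by (intro divide_right_mono) auto
      also have "u^2 = \<bar>u\<bar> powr 2" using 2 by (simp add: powr_numeral)
      also have "\<bar>u\<bar> powr 2 / 2 / \<bar>u\<bar> powr (1 + 2*\<alpha>) = \<bar>u\<bar> powr p / 2"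
      proof -
        have e: "\<bar>u\<bar> powr p * \<bar>u\<bar> powr (1+2*\<alpha>) = \<bar>u\<bar> powr 2"
          unfolding powr_add[symmetric] p_def by simp
        show ?thesis using pos by (subst e[symmetric]) (simp add: field_simps)
      qed
      also have "\<dots> \<le> H1 \<bar>u\<bar>" unfolding H1_def using 2 by simp
      also have "\<dots> \<le> H \<bar>u\<bar>" unfolding H_def using H2nn by simp
      finally show ?thesis .
    next
      case 3
      have pos: "\<bar>u\<bar> powr (1 + 2*\<alpha>) > 0" using 3 by simp
      have "(1 - cos u) / \<bar>u\<bar> powr (1 + 2*\<alpha>) \<le> 2 / \<bar>u\<bar> powr (1 + 2*\<alpha>)"
        using pos by (intro divide_right_mono) (auto simp: add_increasing)
      also have "\<dots> = 2 * \<bar>u\<bar> powr q"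
      proof -
        have "q = -(1+2*\<alpha>)" unfolding q_def by simp
        then show ?thesis by (simp only: powr_minus divide_inverse)
      qed
      also have "\<dots> \<le> H2 \<bar>u\<bar>" unfolding H2_def using 3 by simp
      also have "\<dots> \<le> H \<bar>u\<bar>" unfolding H_def using H1nn by simp
      finally show ?thesis .
    qed
    also have "H \<bar>u\<bar> \<le> H u + H (-u)" using Hnn[of u] Hnn[of "-u"]
      by (cases "u \<ge> 0") auto
    finally show ?thesis .
  qed
  have "(\<integral>\<^sup>+u. ennreal ((1 - cos u) / \<bar>u\<bar> powr (1 + 2*\<alpha>)) \<partial>lborel)
      \<le> (\<integral>\<^sup>+u. ennreal (H u) + ennreal (H (-u)) \<partial>lborel)"
    using Hnn by (intro nn_integral_mono) (simp add: bound flip: ennreal_plus)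
  also have "\<dots> = (\<integral>\<^sup>+u. ennreal (H u) \<partial>lborel) + (\<integral>\<^sup>+u. ennreal (H (-u)) \<partial>lborel)"
    by (rule nn_integral_add) auto
  also have "\<dots> < \<infinity>" using nH nH' by simp
  finally show ?thesis .
qed


lemma scale:
  fixes \<alpha> l :: real assumes "l \<noteq> 0"
  shows "(\<integral>\<^sup>+h. ennreal ((1 - cos (l*h)) / \<bar>h\<bar> powr (1 + 2*\<alpha>)) \<partial>lborel)
    = ennreal (\<bar>l\<bar> powr (2*\<alpha>)) * (\<integral>\<^sup>+u. ennreal ((1 - cos u) / \<bar>u\<bar> powr (1 + 2*\<alpha>)) \<partial>lborel)"
proof -
  define g where "g = (\<lambda>u::real. (1 - cos u) / \<bar>u\<bar> powr (1 + 2*\<alpha>))"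
  have [measurable]: "g \<in> borel_measurable borel" unfolding g_def by measurable
  have C: "(\<integral>\<^sup>+u. ennreal (g u) \<partial>lborel) = ennreal \<bar>l\<bar> * (\<integral>\<^sup>+h. ennreal (g (0 + l*h)) \<partial>lborel)"
    by (rule nn_integral_real_affine) (use assms in auto)
  have pt: "(1 - cos (l*h)) / \<bar>h\<bar> powr (1 + 2*\<alpha>) = \<bar>l\<bar> powr (2*\<alpha>) * (\<bar>l\<bar> * g (l*h))" for h
  proof -
    have e: "\<bar>l\<bar> powr (2*\<alpha>) * \<bar>l\<bar> = \<bar>l\<bar> powr (1 + 2*\<alpha>)"
      using assms by (simp add: powr_add)
    have A: "\<bar>l\<bar> powr (1 + 2*\<alpha>) > 0" using assms by simp
    have "\<bar>l\<bar> powr (2*\<alpha>) * (\<bar>l\<bar> * g (l*h)) = (\<bar>l\<bar> powr (2*\<alpha>) * \<bar>l\<bar>) * ((1 - cos (l*h)) / (\<bar>l\<bar> powr (1 + 2*\<alpha>) * \<bar>h\<bar> powr (1 + 2*\<alpha>)))"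
      unfolding g_def abs_mult by (simp add: powr_mult)
    also have "\<dots> = (1 - cos (l*h)) / \<bar>h\<bar> powr (1 + 2*\<alpha>)"
      unfolding e using A by simp
    finally show ?thesis by simp
  qed
  have "(\<integral>\<^sup>+h. ennreal ((1 - cos (l*h)) / \<bar>h\<bar> powr (1 + 2*\<alpha>)) \<partial>lborel)
      = (\<integral>\<^sup>+h. ennreal (\<bar>l\<bar> powr (2*\<alpha>)) * (ennreal \<bar>l\<bar> * ennreal (g (0 + l*h))) \<partial>lborel)"
  proof -
    have gnn: "g u \<ge> 0" for u unfolding g_def by (simp add: divide_nonneg_nonneg)
    show ?thesis unfolding pt
      by (intro nn_integral_cong) (simp add: ennreal_mult[symmetric] gnn)
  qed
  also have "\<dots> = ennreal (\<bar>l\<bar> powr (2*\<alpha>)) * (ennreal \<bar>l\<bar> * (\<integral>\<^sup>+h. ennreal (g (0 + l*h)) \<partial>lborel))"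
    by (simp add: nn_integral_cmult)
  finally show ?thesis using C unfolding g_def by simp
qed

theorem mainTheorem6:
  fixes M :: "'a measure" and X :: "real \<Rightarrow> 'a \<Rightarrow> complex"
    and R :: "real \<Rightarrow> complex" and \<mu> :: "real measure" and \<alpha> :: real
  assumes "wss_process M X R"
    and "spectral_measure R \<mu>"
    and "symmetric_measure \<mu>"
    and "0 < \<alpha>" and "\<alpha> < 1"
  shows "(\<integral>\<^sup>+ l. ennreal (\<bar>l\<bar> powr (2 * \<alpha>)) \<partial>\<mu>) < \<infinity>
     \<longleftrightarrow> (\<integral>\<^sup>+ h. ennreal (cmod (R 0 - R h) / \<bar>h\<bar> powr (1 + 2 * \<alpha>)) \<partial>lborel) < \<infinity>"
proof -
  have fin: "finite_measure \<mu>" and sets: "sets \<mu> = sets borel"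
    and Rdef: "\<And>\<tau>. R \<tau> = (LINT l|\<mu>. cis (l * \<tau>))"
    using assms(2) unfolding spectral_measure_def by auto
  interpret finite_measure \<mu> by (rule fin)
  have sp: "space \<mu> = UNIV" using sets_eq_imp_space_eq[OF sets] by simp
  have mcong: "measurable \<mu> N = measurable borel N" for N :: "'b measure"
    by (rule measurable_cong_sets) (auto simp: sets)
  have sym: "distr \<mu> borel uminus = \<mu>"
  proof (rule measure_eqI)
    show "sets (distr \<mu> borel uminus) = sets \<mu>" using sets by simp
  next
    fix A assume "A \<in> sets (distr \<mu> borel uminus)"
    then have A: "A \<in> sets borel" by simp
    have um: "uminus \<in> measurable \<mu> borel" unfolding mcong by simp
    have "uminus -` A \<inter> space \<mu> = uminus ` A" unfolding sp
      by (auto simp: image_iff) (metis minus_minus)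
    then show "emeasure (distr \<mu> borel uminus) A = emeasure \<mu> A"
      using assms(3) A unfolding symmetric_measure_def
      by (simp add: emeasure_distr[OF um A])
  qed
  have sin0: "(LINT l|\<mu>. sin (l * h)) = 0" for h
  proof -
    have "(LINT l|\<mu>. sin (l * h)) = (LINT l|distr \<mu> borel uminus. sin (l * h))" using sym by simp
    also have "\<dots> = (LINT l|\<mu>. sin (- l * h))"
      by (rule integral_distr) (auto simp: mcong)
    also have "\<dots> = - (LINT l|\<mu>. sin (l * h))" by simp
    finally show ?thesis by simp
  qed
  have intb: "integrable \<mu> (\<lambda>l. f (l * h))" if "continuous_on UNIV f" "\<And>x. norm (f x) \<le> 1"
    for f :: "real \<Rightarrow> 'c::{banach,second_countable_topology}" and h
  proof (rule integrable_const_bound[where B=1])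
    show "AE x in \<mu>. norm (f (x * h)) \<le> 1" using that by simp
    have "(\<lambda>l. f (l * h)) \<in> borel_measurable borel"
      by (intro borel_measurable_continuous_onI continuous_on_compose2[OF that(1)] continuous_intros) auto
    then show "(\<lambda>l. f (l * h)) \<in> borel_measurable \<mu>" by (simp add: mcong)
  qed
  have key: "cmod (R 0 - R h) = (LINT l|\<mu>. 1 - cos (l * h))" for h
  proof -
    have ic: "integrable \<mu> (\<lambda>l. cos (l * h))" by (rule intb) (auto intro: continuous_intros)
    have isn: "integrable \<mu> (\<lambda>l. sin (l * h))" by (rule intb) (auto intro: continuous_intros)
    have "R h = (LINT l|\<mu>. complex_of_real (cos (l * h)) + \<i> * complex_of_real (sin (l * h)))"
      unfolding Rdef by (simp add: cis.ctr Complex_eq)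
    also have "\<dots> = complex_of_real (LINT l|\<mu>. cos (l * h))"
      using ic isn sin0[of h] by simp
    finally have Rh: "R h = complex_of_real (LINT l|\<mu>. cos (l * h))" .
    have R0: "R 0 = complex_of_real (measure \<mu> UNIV)" unfolding Rdef by (simp add: sp scaleR_conv_of_real)
    have "(LINT l|\<mu>. 1 - cos (l * h)) = measure \<mu> UNIV - (LINT l|\<mu>. cos (l * h))"
      using ic by (simp add: sp)
    moreover have "(LINT l|\<mu>. 1 - cos (l * h)) \<ge> 0" by (rule integral_nonneg_AE) simp
    ultimately show ?thesis unfolding Rh R0 by (simp flip: of_real_diff)
  qed
  define F where "F = (\<lambda>l h::real. ennreal ((1 - cos (l*h)) / \<bar>h\<bar> powr (1 + 2*\<alpha>)))"
  define C where "C = (\<integral>\<^sup>+u. ennreal ((1 - cos u) / \<bar>u\<bar> powr (1 + 2*\<alpha>)) \<partial>lborel)"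
  have inner: "ennreal (cmod (R 0 - R h) / \<bar>h\<bar> powr (1 + 2 * \<alpha>)) = (\<integral>\<^sup>+ l. F l h \<partial>\<mu>)" for h
  proof -
    have ic0: "integrable \<mu> (\<lambda>l. cos (l * h))" by (rule intb) (auto intro: continuous_intros)
    have ic: "integrable \<mu> (\<lambda>l. (1 - cos (l * h)) / \<bar>h\<bar> powr (1 + 2*\<alpha>))"
      by (rule integrable_divide, rule Bochner_Integration.integrable_diff[OF _ ic0]) auto
    show ?thesis unfolding key F_def
      by (subst nn_integral_eq_integral[OF ic]) (auto simp: divide_nonneg_nonneg)
  qed
  have psf: "pair_sigma_finite \<mu> lborel" by unfold_locales
  have Fm: "case_prod F \<in> borel_measurable (\<mu> \<Otimes>\<^sub>M lborel)"
  proof -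
    have "case_prod F \<in> borel_measurable (borel \<Otimes>\<^sub>M borel)" unfolding F_def by measurable
    moreover have "sets (\<mu> \<Otimes>\<^sub>M lborel) = sets (borel \<Otimes>\<^sub>M borel)"
      by (rule sets_pair_measure_cong) (auto simp: sets)
    ultimately show ?thesis using measurable_cong_sets by blast
  qed
  have lm: "(\<lambda>l. ennreal (\<bar>l\<bar> powr (2 * \<alpha>))) \<in> borel_measurable \<mu>" by (simp add: mcong)
  have "(\<integral>\<^sup>+ h. ennreal (cmod (R 0 - R h) / \<bar>h\<bar> powr (1 + 2 * \<alpha>)) \<partial>lborel)
      = (\<integral>\<^sup>+ h. (\<integral>\<^sup>+ l. F l h \<partial>\<mu>) \<partial>lborel)" by (simp add: inner)
  also have "\<dots> = (\<integral>\<^sup>+ l. (\<integral>\<^sup>+ h. F l h \<partial>lborel) \<partial>\<mu>)"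
    by (rule pair_sigma_finite.Fubini'[OF psf Fm])
  also have "\<dots> = (\<integral>\<^sup>+ l. ennreal (\<bar>l\<bar> powr (2 * \<alpha>)) * C \<partial>\<mu>)"
  proof (rule nn_integral_cong)
    fix l :: real
    show "(\<integral>\<^sup>+ h. F l h \<partial>lborel) = ennreal (\<bar>l\<bar> powr (2 * \<alpha>)) * C"
    proof (cases "l = 0")
      case True then show ?thesis unfolding F_def by simp
    next
      case False then show ?thesis unfolding F_def C_def by (rule scale)
    qed
  qed
  also have "\<dots> = (\<integral>\<^sup>+ l. ennreal (\<bar>l\<bar> powr (2 * \<alpha>)) \<partial>\<mu>) * C"
    by (rule nn_integral_multc[OF lm])
  finally have eq: "(\<integral>\<^sup>+ h. ennreal (cmod (R 0 - R h) / \<bar>h\<bar> powr (1 + 2 * \<alpha>)) \<partial>lborel)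
      = (\<integral>\<^sup>+ l. ennreal (\<bar>l\<bar> powr (2 * \<alpha>)) \<partial>\<mu>) * C" .
  have C0: "C \<noteq> 0" unfolding C_def by (rule C_pos) (use assms in auto)
  have Cf: "C < \<infinity>" unfolding C_def by (rule C_fin) (use assms in auto)
  show ?thesis unfolding eq using C0 Cf by (auto simp: ennreal_mult_less_top top.not_eq_extremum)
qed

end
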